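(* Let $(e,h,A),(e',h',A'),(e'',h'',A'')\in\mathcal D_{g,n}$. There exist a graph $\Gamma\in G_{g,n}$ and sets $W,W',W''\in\mathcal C(\Gamma)$ with $W=W'\sqcup W''$ (disjoint union) and $(\mathrm{val}(W),g(W),A(W))=(e,h,A)$, $(\mathrm{val}(W'),g(W'),A(W'))=(e',h',A')$, $(\mathrm{val}(W''),g(W''),A(W''))=(e'',h'',A'')$ if and only if $A=A'\sqcup A''$, $2(h+1-(h'+h''))=e'+e''-e$, and there is a nondegenerate triangle with side lengths $e,e',e''$ (i.e. $e<e'+e''$, $e'<e+e''$, $e''<e+e'$).
   Context: Fix integers $g,n\ge0$ with $2g-2+n>0$, $[n]=\{1,\dots,n\}$. A stable graph of type $(g,n)$ is a finite connected multigraph $\Gamma$ (loops allowed) with genus function $g:V(\Gamma)\to\mathbb Z_{\ge0}$ and markings $A(v)\subseteq[n]$ partitioning $[n]$, such that $|E(\Gamma)|-|V(\Gamma)|+1+\sum_v g(v)=g$ and $2g(v)-2+\mathrm{val}(v)+|A(v)|>0$ for all $v$. $G_{g,n}$ is the set (category) of representatives of isomorphism classes of such graphs. For $W\subseteq V(\Gamma)$: $W^{\mathsf c}=V(\Gamma)\setminus W$, $\mathrm{val}(W)$ = number of edges between $W$ and $W^{\mathsf c}$, $g(W)=|E(\Gamma[W])|-|W|+1+\sum_{v\in W}g(v)$ with $\Gamma[W]$ the induced subgraph, $A(W)=\bigcup_{v\in W}A(v)$. $W$ is nontrivial biconnected if $\emptyset\ne W\ne V(\Gamma)$ and $\Gamma[W],\Gamma[W^{\mathsf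 c}]$ are connected; $\mathcal C(\Gamma)$ is the set of these. The vine graph $V(e,h,A)$ has two vertices $v_1,v_2$ joined by $e$ edges, no loops, $g(v_1)=h$, $A(v_1)=A$, $g(v_2)=g+1-e-h$, $A(v_2)=[n]\setminus A$. $\mathcal D_{g,n}$ is the set of triples $(e,h,A)$ with $e\ge1$, $h\ge0$, $g+1-e-h\ge0$, $A\subseteq[n]$, such that $V(e,h,A)$ is stable. *)

theory Defs
  imports Main
begin

text \<open>Vertices are natural numbers (any finite graph is isomorphic to one
on natural-number vertices), edges form a list of endpoint pairs (so multiple edges and
loops are allowed; the edge set is indexed by list positions), gen is the genus function
and mark the marking function.\<close>

record sgraph =
  verts :: "nat set"
  edges :: "(nat \<times> nat) list"
  gen :: "nat \<Rightarrow> nat"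
  mark :: "nat \<Rightarrow> nat set"

definition vert_val :: "sgraph \<Rightarrow> nat \<Rightarrow> nat" where
  "vert_val G v = (\<Sum>x\<leftarrow>edges G. (if fst x = v then 1 else 0) + (if snd x = v then 1 else 0))"

definition adj_in :: "sgraph \<Rightarrow> nat set \<Rightarrow> (nat \<times> nat) set" where
  "adj_in G W = {(a, b). a \<in> W \<and> b \<in> W \<and> ((a, b) \<in> set (edges G) \<or> (b, a) \<in> set (edges G))}"

definition connected_on :: "sgraph \<Rightarrow> nat set \<Rightarrow> bool" where
  "connected_on G W \<longleftrightarrow> W \<noteq> {} \<and> (\<forall>u\<in>W. \<forall>v\<in>W. (u, v) \<in> (adj_in G W)\<^sup>*)"

definition set_val :: "sgraph \<Rightarrow> nat set \<Rightarrow> nat" where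
  "set_val G W = length (filter (\<lambda>x. (fst x \<in> W) \<noteq> (snd x \<in> W)) (edges G))"

definition edges_in :: "sgraph \<Rightarrow> nat set \<Rightarrow> nat" where
  "edges_in G W = length (filter (\<lambda>x. fst x \<in> W \<and> snd x \<in> W) (edges G))"

definition set_genus :: "sgraph \<Rightarrow> nat set \<Rightarrow> int" where
  "set_genus G W = int (edges_in G W) - int (card W) + 1 + (\<Sum>v\<in>W. int (gen G v))"

definition set_marks :: "sgraph \<Rightarrow> nat set \<Rightarrow> nat set" where
  "set_marks G W = (\<Union>v\<in>W. mark G v)"

definition stable_graph :: "nat \<Rightarrow> nat \<Rightarrow> sgraph \<Rightarrow> bool" where
  "stable_graph g n G \<longleftrightarrow>
     finite (verts G) \<and>
     (\<forall>x\<in>set (edges G). fst x \<in> verts G \<and> snd x \<in> verts G) \<and>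
     connected_on G (verts G) \<and>
     (\<forall>v\<in>verts G. mark G v \<subseteq> {1..n}) \<and>
     (\<forall>v\<in>verts G. \<forall>w\<in>verts G. v \<noteq> w \<longrightarrow> mark G v \<inter> mark G w = {}) \<and>
     (\<Union>v\<in>verts G. mark G v) = {1..n} \<and>
     int (length (edges G)) - int (card (verts G)) + 1 + (\<Sum>v\<in>verts G. int (gen G v)) = int g \<and>
     (\<forall>v\<in>verts G. 2 * int (gen G v) - 2 + int (vert_val G v) + int (card (mark G v)) > 0)"

definition biconn :: "sgraph \<Rightarrow> nat set set" where
  "biconn G = {W. W \<subseteq> verts G \<and> W \<noteq> {} \<and> W \<noteq> verts G \<and>
                  connected_on G W \<and> connected_on G (verts G - W)}"

definition vine :: "nat \<Rightarrow> nat \<Rightarrow> nat \<Rightarrow> nat \<Rightarrow> nat set \<Rightarrow> sgraph" where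
  "vine g n e h A = \<lparr> verts = {0, 1}, edges = replicate e (0, 1),
     gen = (\<lambda>v. if v = 0 then h else g + 1 - e - h),
     mark = (\<lambda>v. if v = 0 then A else {1..n} - A) \<rparr>"

definition D_set :: "nat \<Rightarrow> nat \<Rightarrow> (nat \<times> nat \<times> nat set) set" where
  "D_set g n = {(e, h, A). e \<ge> 1 \<and> int g + 1 - int e - int h \<ge> 0 \<and> A \<subseteq> {1..n} \<and>
                  stable_graph g n (vine g n e h A)}"

end

theory Submission imports Defs begin

definition cross :: "sgraph \<Rightarrow> nat set \<Rightarrow> nat set \<Rightarrow> nat" where
  "cross G X Y = length (filter (\<lambda>x. (fst x\<in>X \<and> snd x\<in>Y) \<or> (fst x\<in>Y \<and> snd x\<in>X)) (edges G))"

lemma exit_step: "(u,v)\<in>R\<^sup>* \<Longrightarrow> u\<in>X \<Longrightarrow> v\<notin>X \<Longrightarrow> \<exists>p q. (p,q)\<in>R \<and> p\<in>X \<and> q\<notin>X"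
proof (induction rule: rtrancl_induct)
  case base then show ?case by simp
next
  case (step y z)
  show ?case
  proof (cases "y \<in> X")
    case True then show ?thesis using step.hyps(2) step.prems(2) by blast
  next
    case False then show ?thesis using step.IH step.prems(1) by blast
  qed
qed

lemma cross_pos:
  assumes "connected_on G (X\<union>Y)" "X\<inter>Y={}" "X\<noteq>{}" "Y\<noteq>{}"
  shows "cross G X Y > 0"
proof -
  obtain u where u: "u\<in>X" using assms(3) by blast
  obtain v where v: "v\<in>Y" using assms(4) by blast
  have vX: "v \<notin> X" using v assms(2) by blast
  have "(u,v) \<in> (adj_in G (X\<union>Y))\<^sup>*" using assms(1) u v unfolding connected_on_def by blast
  then obtain p q where pq: "(p,q)\<in>adj_in G (X\<union>Y)" "p\<in>X" "q\<notin>X"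
    using exit_step[OF _ u vX] by blast
  then have qY: "q \<in> Y" and ed: "(p,q)\<in>set (edges G) \<or> (q,p)\<in>set(edges G)" unfolding adj_in_def by auto
  have "filter (\<lambda>x. (fst x\<in>X \<and> snd x\<in>Y) \<or> (fst x\<in>Y \<and> snd x\<in>X)) (edges G) \<noteq> []"
    unfolding filter_empty_conv using ed pq(2) qY by (metis fst_conv snd_conv)
  then show ?thesis unfolding cross_def by simp
qed

lemma len_filter_lin:
  "(\<And>x. x\<in>set xs \<Longrightarrow> (if P x then 1 else 0) + k*(if Q x then 1 else 0) = (if R x then 1 else 0) + (if S x then (1::nat) else 0))
   \<Longrightarrow> length (filter P xs) + k*length (filter Q xs) = length (filter R xs) + length (filter S xs)"
proof (induction xs)
  case (Cons x xs)
  have "(if P x then 1 else 0) + k*(if Q x then 1 else 0) = (if R x then 1 else 0) + (if S x then (1::nat) else 0)"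
    using Cons.prems by simp
  moreover have "length (filter P xs) + k*length (filter Q xs) = length (filter R xs) + length (filter S xs)"
    using Cons by simp
  ultimately show ?case by (simp add: algebra_simps split: if_splits)
qed simp

lemma len_filter_lin3:
  "(\<And>x. x\<in>set xs \<Longrightarrow> (if P x then 1 else 0) = (if Q x then 1 else 0) + (if R x then 1 else 0) + (if S x then (1::nat) else 0))
   \<Longrightarrow> length (filter P xs) = length (filter Q xs) + length (filter R xs) + length (filter S xs)"
proof (induction xs)
  case (Cons x xs)
  have "(if P x then 1 else 0) = (if Q x then 1 else 0) + (if R x then 1 else 0) + (if S x then (1::nat) else 0)"
    using Cons.prems by simp
  moreover have "length (filter P xs) = length (filter Q xs) + length (filter R xs) + length (filter S xs)"
    using Cons by simp
  ultimately show ?case by (simp split: if_splits)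
qed simp

lemma val_union: assumes "X\<inter>Y={}" shows "set_val G (X\<union>Y) + 2 * cross G X Y = set_val G X + set_val G Y"
  unfolding set_val_def cross_def
proof (rule len_filter_lin)
  fix x :: "nat\<times>nat"
  have d: "\<And>z. z\<in>X \<Longrightarrow> z\<notin>Y" using assms by blast
  show "(if (fst x \<in> X\<union>Y) \<noteq> (snd x \<in> X\<union>Y) then 1 else 0) + 2 * (if (fst x\<in>X \<and> snd x\<in>Y) \<or> (fst x\<in>Y \<and> snd x\<in>X) then 1 else 0)
     = (if (fst x\<in>X) \<noteq> (snd x\<in>X) then 1 else 0) + (if (fst x\<in>Y) \<noteq> (snd x\<in>Y) then (1::nat) else 0)"
    using d[of "fst x"] d[of "snd x"]
    by (cases "fst x \<in> X"; cases "snd x \<in> X"; cases "fst x\<in>Y"; cases "snd x\<in>Y") simp_all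
qed

lemma genus_union:
  assumes "X\<inter>Y={}" "finite X" "finite Y"
  shows "set_genus G (X\<union>Y) = set_genus G X + set_genus G Y + int (cross G X Y) - 1"
proof -
  have d: "\<And>z. z\<in>X \<Longrightarrow> z\<notin>Y" using assms by blast
  have "edges_in G (X\<union>Y) = edges_in G X + edges_in G Y + cross G X Y"
    unfolding edges_in_def cross_def
  proof (rule len_filter_lin3)
    fix x :: "nat\<times>nat"
    show "(if fst x \<in> X\<union>Y \<and> snd x \<in> X\<union>Y then 1 else 0) = (if fst x\<in>X \<and> snd x\<in>X then 1 else 0) + (if fst x\<in>Y \<and> snd x\<in>Y then 1 else 0) + (if (fst x\<in>X \<and> snd x\<in>Y) \<or> (fst x\<in>Y \<and> snd x\<in>X) then (1::nat) else 0)"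
    using d[of "fst x"] d[of "snd x"]
    by (cases "fst x \<in> X"; cases "snd x \<in> X"; cases "fst x\<in>Y"; cases "snd x\<in>Y") simp_all
  qed
  moreover have "card (X\<union>Y) = card X + card Y" using assms card_Un_disjoint by blast
  moreover have "(\<Sum>v\<in>X\<union>Y. int (gen G v)) = (\<Sum>v\<in>X. int (gen G v)) + (\<Sum>v\<in>Y. int (gen G v))"
    using assms sum.union_disjoint by blast
  ultimately show ?thesis unfolding set_genus_def by simp
qed

lemma val_compl: assumes "stable_graph g n G" shows "set_val G (verts G - X) = set_val G X"
proof -
  have E: "\<forall>x\<in>set (edges G). fst x \<in> verts G \<and> snd x \<in> verts G" using assms unfolding stable_graph_def by (elim conjE) assumption
  have "filter (\<lambda>x. (fst x\<in>verts G - X) \<noteq> (snd x\<in>verts G - X)) (edges G) = filter (\<lambda>x. (fst x\<in>X) \<noteq> (snd x\<in>X)) (edges G)"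
  proof (rule filter_cong[OF refl])
    fix x assume "x \<in> set (edges G)"
    then have "fst x \<in> verts G" "snd x \<in> verts G" using E by auto
    then show "((fst x\<in>verts G - X) \<noteq> (snd x\<in>verts G - X)) = ((fst x\<in>X) \<noteq> (snd x\<in>X))" by simp
  qed
  then show ?thesis unfolding set_val_def by simp
qed

lemma marks_disj:
  assumes "stable_graph g n G" "X \<subseteq> verts G" "Y \<subseteq> verts G" "X\<inter>Y={}"
  shows "set_marks G X \<inter> set_marks G Y = {}"
proof (rule ccontr)
  assume "set_marks G X \<inter> set_marks G Y \<noteq> {}"
  then obtain z where "z \<in> set_marks G X" "z \<in> set_marks G Y" by blast
  then obtain v w where vw: "v\<in>X" "w\<in>Y" "z\<in>mark G v" "z \<in> mark G w" unfolding set_marks_def by blast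
  have D: "\<forall>v\<in>verts G. \<forall>w\<in>verts G. v \<noteq> w \<longrightarrow> mark G v \<inter> mark G w = {}"
    using assms(1) unfolding stable_graph_def by (elim conjE) assumption
  have "v \<noteq> w" using vw assms(4) by blast
  moreover have "v \<in> verts G" "w \<in> verts G" using vw assms(2,3) by blast+
  ultimately have "mark G v \<inter> mark G w = {}" using D by blast
  then show False using vw by blast
qed

lemma forward:
  assumes sg: "stable_graph g n G" and bW: "W\<in>biconn G" and bW1: "W'\<in>biconn G" and bW2: "W''\<in>biconn G"
    and WU: "W = W'\<union>W''" and dj: "W'\<inter>W''={}"
  shows "set_marks G W = set_marks G W' \<union> set_marks G W'' \<and> set_marks G W' \<inter> set_marks G W'' = {} \<and>
    2*(set_genus G W + 1 - (set_genus G W' + set_genus G W'')) = int (set_val G W') + int (set_val G W'') - int (set_val G W) \<and>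
    set_val G W < set_val G W' + set_val G W'' \<and> set_val G W' < set_val G W + set_val G W'' \<and> set_val G W'' < set_val G W + set_val G W'"
proof -
  define V where "V = verts G"
  define U where "U = V - W"
  have finV: "finite V" using sg unfolding stable_graph_def V_def by (elim conjE) assumption
  have W: "W \<subseteq> V" "W \<noteq> {}" "W \<noteq> V" "connected_on G W" "connected_on G (V - W)"
    using bW unfolding biconn_def V_def by auto
  have W1: "W' \<subseteq> V" "W' \<noteq> {}" "connected_on G (V - W')"
    using bW1 unfolding biconn_def V_def by auto
  have W2: "W'' \<subseteq> V" "W'' \<noteq> {}" "connected_on G (V - W'')"
    using bW2 unfolding biconn_def V_def by auto
  have fin1: "finite W'" "finite W''" using W1 W2 finV finite_subset by blast+
  have Une: "U \<noteq> {}" using W unfolding U_def by blast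
  have m1: "set_marks G W = set_marks G W' \<union> set_marks G W''" unfolding WU set_marks_def by blast
  have m2: "set_marks G W' \<inter> set_marks G W'' = {}" using marks_disj[OF sg] W1 W2 dj V_def by blast
  have a1: "set_val G W + 2 * cross G W' W'' = set_val G W' + set_val G W''"
    using val_union[OF dj] WU by simp
  have a2: "cross G W' W'' > 0" using cross_pos[of G W' W''] W(4) WU dj W1 W2 by simp
  have gu: "set_genus G W = set_genus G W' + set_genus G W'' + int (cross G W' W'') - 1"
    using genus_union[OF dj fin1] WU by simp
  have d1: "W' \<inter> U = {}" unfolding U_def WU by blast
  have e1: "W' \<union> U = V - W''" unfolding U_def WU using W1 dj by blast
  have b1: "set_val G (V - W'') + 2 * cross G W' U = set_val G W' + set_val G U"
    using val_union[OF d1] e1 by simp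
  have b2: "cross G W' U > 0" using cross_pos[of G W' U] W2(3) e1 d1 W1 Une by simp
  have d2: "W'' \<inter> U = {}" unfolding U_def WU by blast
  have e2: "W'' \<union> U = V - W'" unfolding U_def WU using W2 dj by blast
  have c1: "set_val G (V - W') + 2 * cross G W'' U = set_val G W'' + set_val G U"
    using val_union[OF d2] e2 by simp
  have c2: "cross G W'' U > 0" using cross_pos[of G W'' U] W1(3) e2 d2 W2 Une by simp
  have vU: "set_val G U = set_val G W" unfolding U_def V_def by (rule val_compl[OF sg])
  have v1: "set_val G (V - W') = set_val G W'" unfolding V_def by (rule val_compl[OF sg])
  have v2: "set_val G (V - W'') = set_val G W''" unfolding V_def by (rule val_compl[OF sg])
  show ?thesis using m1 m2 a1 a2 gu b1 b2 c1 c2 vU v1 v2 by simp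
qed

lemma conn_complete:
  assumes "W \<noteq> {}" "\<And>u v. u\<in>W \<Longrightarrow> v\<in>W \<Longrightarrow> u\<noteq>v \<Longrightarrow> (u,v)\<in>set(edges G) \<or> (v,u)\<in>set(edges G)"
  shows "connected_on G W"
  unfolding connected_on_def
proof (intro conjI ballI)
  show "W \<noteq> {}" by fact
next
  fix u v assume uv: "u\<in>W" "v\<in>W"
  show "(u,v) \<in> (adj_in G W)\<^sup>*"
  proof (cases "u = v")
    case True then show ?thesis by simp
  next
    case False
    then have "(u,v) \<in> adj_in G W" using assms(2)[OF uv False] uv unfolding adj_in_def by blast
    then show ?thesis by blast
  qed
qed

lemma vine_stab:
  assumes "(e,h,A) \<in> D_set g n"
  shows "A \<subseteq> {1..n}" "int g + 1 - int e - int h \<ge> 0" "e \<ge> 1"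
    "0 < 2 * int h - 2 + int e + int (card A)"
    "0 < 2 * int (g + 1 - e - h) - 2 + int e + int (card ({1..n} - A))"
proof -
  have D: "e \<ge> 1" "int g + 1 - int e - int h \<ge> 0" "A \<subseteq> {1..n}" "stable_graph g n (vine g n e h A)"
    using assms unfolding D_set_def by auto
  then show "A \<subseteq> {1..n}" "int g + 1 - int e - int h \<ge> 0" "e \<ge> 1" by auto
  have S: "\<forall>v\<in>verts (vine g n e h A). 2 * int (gen (vine g n e h A) v) - 2 + int (vert_val (vine g n e h A) v) + int (card (mark (vine g n e h A) v)) > 0"
    using D(4) unfolding stable_graph_def by (elim conjE) assumption
  have vv0: "vert_val (vine g n e h A) 0 = e" unfolding vert_val_def vine_def by (simp add: sum_list_replicate)
  have vv1: "vert_val (vine g n e h A) 1 = e" unfolding vert_val_def vine_def by (simp add: sum_list_replicate)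
  from S vv0 show "0 < 2 * int h - 2 + int e + int (card A)" by (simp add: vine_def)
  from S vv1 show "0 < 2 * int (g + 1 - e - h) - 2 + int e + int (card ({1..n} - A))" by (simp add: vine_def)
qed

lemma backward:
  assumes D: "(e,h,A)\<in>D_set g n" "(e',h',A')\<in>D_set g n" "(e'',h'',A'')\<in>D_set g n"
    and AU: "A = A'\<union>A''" and Adj: "A'\<inter>A''={}"
    and par: "2*(int h+1-(int h'+int h'')) = int e'+int e''-int e"
    and t1: "e<e'+e''" and t2: "e'<e+e''" and t3: "e''<e+e'"
  shows "\<exists>G W W' W''. stable_graph g n G \<and>
            W \<in> biconn G \<and> W' \<in> biconn G \<and> W'' \<in> biconn G \<and>
            W = W' \<union> W'' \<and> W' \<inter> W'' = {} \<and>
            set_val G W = e \<and> set_genus G W = int h \<and> set_marks G W = A \<and>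
            set_val G W' = e' \<and> set_genus G W' = int h' \<and> set_marks G W' = A' \<and>
            set_val G W'' = e'' \<and> set_genus G W'' = int h'' \<and> set_marks G W'' = A''"
proof -
  note s0 = vine_stab[OF D(1)] and s1 = vine_stab[OF D(2)] and s2 = vine_stab[OF D(3)]
  define a where "a = nat (int h + 1 - int h' - int h'')"
  have ia: "2 * int a = int e' + int e'' - int e" using par t1 unfolding a_def by simp
  have a0: "a \<ge> 1" "a < e'" "a < e''" using ia t1 t2 t3 by linarith+
  define b where "b = e' - a"
  define c where "c = e'' - a"
  have abc: "b \<ge> 1" "c \<ge> 1" "a + b = e'" "a + c = e''" "b + c = e" using ia a0 unfolding b_def c_def by linarith+
  have ia2: "int a = int h + 1 - int h' - int h''" unfolding a_def using par t1 by simp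
  have ha: "int h = int h' + int h'' + int a - 1" using ia2 by linarith
  define k where "k = g + 1 - e - h"
  have ik: "int k = int g + 1 - int e - int h" using s0(2) unfolding k_def by linarith
  define G where "G = \<lparr> verts = {0,1,2::nat}, edges = replicate a (0,1) @ replicate b (0,2) @ replicate c (1,2),
     gen = (\<lambda>v. if v = 0 then h' else if v = 1 then h'' else k),
     mark = (\<lambda>v. if v = 0 then A' else if v = 1 then A'' else {1..n} - A) \<rparr>"
  have sE: "set (edges G) = {(0,1),(0,2),(1,2)}" unfolding G_def using abc a0 by auto
  have vG[simp]: "verts G = {0,1,2}" unfolding G_def by simp
  have gG[simp]: "gen G = (\<lambda>v. if v = 0 then h' else if v = 1 then h'' else k)" unfolding G_def by simp
  have mG[simp]: "mark G = (\<lambda>v. if v = 0 then A' else if v = 1 then A'' else {1..n} - A)" unfolding G_def by simp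
  have eG: "edges G = replicate a (0,1) @ replicate b (0,2) @ replicate c (1,2)" unfolding G_def by simp
  have conn: "\<And>W. W \<subseteq> {0,1,2} \<Longrightarrow> W \<noteq> {} \<Longrightarrow> connected_on G W"
    by (rule conn_complete) (auto simp: sE)
  have vv: "vert_val G 0 = e'" "vert_val G 1 = e''" "vert_val G 2 = e"
    unfolding vert_val_def eG using abc by (simp_all add: sum_list_replicate)
  have A0: "A \<subseteq> {1..n}" by (rule s0(1))
  have stab: "stable_graph g n G"
    unfolding stable_graph_def
  proof (intro conjI)
    show "finite (verts G)" by simp
    show "\<forall>x\<in>set (edges G). fst x \<in> verts G \<and> snd x \<in> verts G" using sE by auto
    show "connected_on G (verts G)" using conn by simp
    show "\<forall>v\<in>verts G. mark G v \<subseteq> {1..n}" using A0 AU by auto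
    show "\<forall>v\<in>verts G. \<forall>w\<in>verts G. v \<noteq> w \<longrightarrow> mark G v \<inter> mark G w = {}" using Adj AU by auto
    show "(\<Union>v\<in>verts G. mark G v) = {1..n}" using A0 AU by auto
    show "int (length (edges G)) - int (card (verts G)) + 1 + (\<Sum>v\<in>verts G. int (gen G v)) = int g"
      using abc ha ik by (simp add: eG)
    show "\<forall>v\<in>verts G. 2 * int (gen G v) - 2 + int (vert_val G v) + int (card (mark G v)) > 0"
    proof -
      have u: "0 < 2*int k - 2 + int e + int (card ({1..n}-A))" using s0(5) unfolding k_def .
      show ?thesis using vv u s1(4) s2(4) by simp
    qed
  qed
  have cc: "connected_on G {0}" "connected_on G {1}" "connected_on G {0,1}"
     "connected_on G {1,2}" "connected_on G {0,2}" "connected_on G {2}"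
    by (rule conn; simp)+
  have dd: "{0,1,2} - {0::nat} = {1,2}" "{0,1,2} - {1::nat} = {0,2}" "{0,1,2} - {0,1::nat} = {2}" by auto
  have bic: "{0} \<in> biconn G" "{1} \<in> biconn G" "{0,1} \<in> biconn G"
  proof -
    have n2: "(2::nat) \<notin> {0,1}" "(2::nat) \<notin> {0}" "(2::nat) \<notin> {1}" "(2::nat) \<in> {0,1,2}" by simp_all
    have "{0::nat} \<subseteq> {0,1,2}" "{1::nat} \<subseteq> {0,1,2}" "{0::nat,1} \<subseteq> {0,1,2}" by auto
    moreover have "{0::nat} \<noteq> {0,1,2}" "{1::nat} \<noteq> {0,1,2}" "{0::nat,1} \<noteq> {0,1,2}" using n2 by metis+
    ultimately
    show "{0} \<in> biconn G" "{1} \<in> biconn G" "{0,1} \<in> biconn G"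
      unfolding biconn_def mem_Collect_eq vG dd using cc by (intro conjI; simp)+
  qed
  have sv: "set_val G {0,1} = e" "set_val G {0} = e'" "set_val G {1} = e''"
    unfolding set_val_def eG using abc by (simp_all add: filter_replicate)
  have ei: "edges_in G {0,1} = a" "edges_in G {0} = 0" "edges_in G {1} = 0"
    unfolding edges_in_def eG by (simp_all add: filter_replicate)
  have sg: "set_genus G {0,1} = int h" "set_genus G {0} = int h'" "set_genus G {1} = int h''"
    unfolding set_genus_def using ei ha by simp_all
  have sm: "set_marks G {0,1} = A" "set_marks G {0} = A'" "set_marks G {1} = A''"
    unfolding set_marks_def using AU by (simp_all add: Un_commute)
  show ?thesis
    apply (rule exI[of _ G], rule exI[of _ "{0,1}"], rule exI[of _ "{0}"], rule exI[of _ "{1}"])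
    apply (intro conjI)
    using stab bic sv sg sm by (simp_all add: insert_commute)
qed

theorem mainTheorem10:
  fixes g n e h e' h' e'' h'' :: nat and A A' A'' :: "nat set"
  assumes "2 * int g - 2 + int n > 0"
    and "(e, h, A) \<in> D_set g n" and "(e', h', A') \<in> D_set g n" and "(e'', h'', A'') \<in> D_set g n"
  shows "(\<exists>G W W' W''. stable_graph g n G \<and>
            W \<in> biconn G \<and> W' \<in> biconn G \<and> W'' \<in> biconn G \<and>
            W = W' \<union> W'' \<and> W' \<inter> W'' = {} \<and>
            set_val G W = e \<and> set_genus G W = int h \<and> set_marks G W = A \<and>
            set_val G W' = e' \<and> set_genus G W' = int h' \<and> set_marks G W' = A' \<and>
            set_val G W'' = e'' \<and> set_genus G W'' = int h'' \<and> set_marks G W'' = A'')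
     \<longleftrightarrow> (A = A' \<union> A'' \<and> A' \<inter> A'' = {} \<and>
          2 * (int h + 1 - (int h' + int h'')) = int e' + int e'' - int e \<and>
          e < e' + e'' \<and> e' < e + e'' \<and> e'' < e + e')"
proof
  assume "\<exists>G W W' W''. stable_graph g n G \<and>
            W \<in> biconn G \<and> W' \<in> biconn G \<and> W'' \<in> biconn G \<and>
            W = W' \<union> W'' \<and> W' \<inter> W'' = {} \<and>
            set_val G W = e \<and> set_genus G W = int h \<and> set_marks G W = A \<and>
            set_val G W' = e' \<and> set_genus G W' = int h' \<and> set_marks G W' = A' \<and>
            set_val G W'' = e'' \<and> set_genus G W'' = int h'' \<and> set_marks G W'' = A''"
  then obtain G W W' W'' where H: "stable_graph g n G"
            "W \<in> biconn G" "W' \<in> biconn G" "W'' \<in> biconn G"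
            "W = W' \<union> W''" "W' \<inter> W'' = {}"
            "set_val G W = e" "set_genus G W = int h" "set_marks G W = A"
            "set_val G W' = e'" "set_genus G W' = int h'" "set_marks G W' = A'"
            "set_val G W'' = e''" "set_genus G W'' = int h''" "set_marks G W'' = A''" by blast
  from forward[OF H(1-6)] show "A = A' \<union> A'' \<and> A' \<inter> A'' = {} \<and>
          2 * (int h + 1 - (int h' + int h'')) = int e' + int e'' - int e \<and>
          e < e' + e'' \<and> e' < e + e'' \<and> e'' < e + e'"
    unfolding H(7-15) .
next
  assume "A = A' \<union> A'' \<and> A' \<inter> A'' = {} \<and>
          2 * (int h + 1 - (int h' + int h'')) = int e' + int e'' - int e \<and>
          e < e' + e'' \<and> e' < e + e'' \<and> e'' < e + e'"
  then show "\<exists>G W W' W''. stable_graph g n G \<and>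
            W \<in> biconn G \<and> W' \<in> biconn G \<and> W'' \<in> biconn G \<and>
            W = W' \<union> W'' \<and> W' \<inter> W'' = {} \<and>
            set_val G W = e \<and> set_genus G W = int h \<and> set_marks G W = A \<and>
            set_val G W' = e' \<and> set_genus G W' = int h' \<and> set_marks G W' = A' \<and>
            set_val G W'' = e'' \<and> set_genus G W'' = int h'' \<and> set_marks G W'' = A''"
    using backward[OF assms(2-4)] by blast
qed

end
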